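(* Let $\mathbf L\in\mathbb R_+^{n\times k}$ and $\boldsymbol\psi:\mathcal C\to\mathbb R_+^n$. Suppose there exist $r\in\mathbb Z_+$ and points $\mathbf z_1,\dots,\mathbf z_r\in\mathcal S_\psi$ such that $\bigcup_{j=1}^r\mathcal N^\psi(\mathbf z_j)=\Delta_n$ and, for each $j\in[r]$, there exists $t\in[k]$ with $\mathcal N^\psi(\mathbf z_j)\subseteq\mathcal Q^{\mathbf L}_t$. Then $\boldsymbol\psi$ is $\mathbf L$-calibrated.
   Context: Notation: $[m]=\{1,\dots,m\}$; $\Delta_n=\{\mathbf p\in\mathbb R_+^n:\sum_i p_i=1\}$. A loss matrix $\mathbf L\in\mathbb R_+^{n\times k}$ has columns $\boldsymbol\ell_t$, $t\in[k]$. A surrogate loss is $\boldsymbol\psi:\mathcal C\to\mathbb R_+^n$ with $\mathcal C\subseteq\mathbb R^d$ convex; $\mathcal R_\psi=\boldsymbol\psi(\mathcal C)$, $\mathcal S_\psi=\operatorname{conv}(\mathcal R_\psi)$. $\boldsymbol\psi$ is $\mathbf L$-calibrated if there is $\mathrm{pred}:\mathcal C\to[k]$ such that for all $\mathbf p\in\Delta_n$: $\inf_{\mathbf u\in\mathcal C:\mathrm{pred}(\mathbf u)\notin\operatorname{argmin}_t\mathbf p^\top\boldsymbol\ell_t}\mathbf p^\top\boldsymbol\psi(\mathbf u)>\inf_{\mathbf u\in\mathcal C}\mathbf p^\top\boldsymbol\psi(\mathbf u)$. Trigger probability set: $\mathcal Q^{\mathbf L}_t=\{\mathbf p\in\Delta_n: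 t\in\operatorname{argmin}_{t'\in[k]}\mathbf p^\top\boldsymbol\ell_{t'}\}$. Positive normal set at $\mathbf z\in\mathcal S_\psi$: $\mathcal N^\psi(\mathbf z)=\{\mathbf p\in\Delta_n:\mathbf p^\top\mathbf z=\inf_{\mathbf z'\in\mathcal S_\psi}\mathbf p^\top\mathbf z'\}$. *)

theory Defs
  imports "HOL-Analysis.Analysis"
begin

definition prob_simplex :: "(real ^ 'n) set" where
  "prob_simplex = {p. (\<forall>i. 0 \<le> p $ i) \<and> (\<Sum>i\<in>UNIV. p $ i) = 1}"

text \<open>argmin over t of p . l_t, for a loss matrix given by its columns L t.\<close>
definition argmin_loss :: "('k \<Rightarrow> real ^ 'n) \<Rightarrow> real ^ 'n \<Rightarrow> 'k set" where
  "argmin_loss L p = {t. \<forall>t'. p \<bullet> L t \<le> p \<bullet> L t'}"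

text \<open>Calibration; infima are taken in the extended reals (inf of the empty set is +infinity).\<close>
definition calibrated ::
  "('k \<Rightarrow> real ^ 'n) \<Rightarrow> ('d \<Rightarrow> real ^ 'n) \<Rightarrow> 'd set \<Rightarrow> bool" where
  "calibrated L psi C \<longleftrightarrow>
     (\<exists>pred :: 'd \<Rightarrow> 'k. \<forall>p\<in>prob_simplex.
        (INF u\<in>{u\<in>C. pred u \<notin> argmin_loss L p}. ereal (p \<bullet> psi u))
          > (INF u\<in>C. ereal (p \<bullet> psi u)))"

definition trigger_set :: "('k \<Rightarrow> real ^ 'n) \<Rightarrow> 'k \<Rightarrow> (real ^ 'n) set" where
  "trigger_set L t = {p\<in>prob_simplex. t \<in> argmin_loss L p}"

definition S_psi :: "('d \<Rightarrow> real ^ 'n) \<Rightarrow> 'd set \<Rightarrow> (real ^ 'n) set" where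
  "S_psi psi C = convex hull (psi ` C)"

definition normal_set :: "('d \<Rightarrow> real ^ 'n) \<Rightarrow> 'd set \<Rightarrow> real ^ 'n \<Rightarrow> (real ^ 'n) set" where
  "normal_set psi C z = {p\<in>prob_simplex. p \<bullet> z = Inf ((\<lambda>z'. p \<bullet> z') ` S_psi psi C)}"

end

theory Submission
  imports Defs
begin

lemma inner_mono_nonneg:
  fixes p c w :: "real^'n"
  assumes "\<forall>i. 0 \<le> p$i" "\<forall>i. c$i \<le> w$i"
  shows "p \<bullet> c \<le> p \<bullet> w"
  unfolding inner_vec_def using assms by (auto intro!: sum_mono mult_left_mono)

lemma closed_orthant: "closed {y::real^'n. \<forall>i. 0 \<le> y$i}"
proof -
  have "{y::real^'n. \<forall>i. 0 \<le> y$i} = (\<Inter>i. {y. 0 \<le> y$i})" by auto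
  moreover have "closed {y::real^'n. 0 \<le> y$i}" for i
    by (intro closed_Collect_le continuous_intros)
  ultimately show ?thesis by auto
qed

lemma convex_orthant: "convex {y::real^'n. \<forall>i. 0 \<le> y$i}"
  unfolding convex_def by (auto intro!: add_nonneg_nonneg mult_nonneg_nonneg)

lemma in_Z:
  fixes V :: "(real^'n::finite) set" and w :: "real^'n"
  assumes fin: "finite V" and ne: "V \<noteq> {}"
    and H: "\<forall>q\<in>prob_simplex. \<exists>v\<in>V. q \<bullet> v \<le> q \<bullet> w"
  shows "\<exists>c\<in>convex hull V. \<forall>i. c$i \<le> w$i"
proof (rule ccontr)
  assume nz: "\<not> ?thesis"
  define Pos where "Pos = {y::real^'n. \<forall>i. 0 \<le> y$i}"
  define Z where "Z = (\<Union>x\<in>Pos. \<Union>c\<in>convex hull V. {x + c})"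
  have "closed Z" unfolding Z_def Pos_def
    by (rule closed_compact_sums[OF closed_orthant compact_convex_hull[OF finite_imp_compact[OF fin]]])
  moreover have "convex Z" unfolding Z_def Pos_def
    by (rule convex_sums[OF convex_orthant convex_convex_hull])
  moreover have "w \<notin> Z"
  proof
    assume "w \<in> Z"
    then obtain x c where "x \<in> Pos" "c \<in> convex hull V" "w = x + c" unfolding Z_def by auto
    then show False using nz unfolding Pos_def by force
  qed
  ultimately obtain a b where ab: "a \<bullet> w < b" "\<forall>x\<in>Z. a \<bullet> x > b"
    using separating_hyperplane_closed_point by blast
  obtain c0 where c0: "c0 \<in> convex hull V" using ne hull_subset by fastforce
  have ann: "0 \<le> a$i" for i
  proof (rule ccontr)
    assume "\<not> 0 \<le> a$i"
    hence ai: "a$i < 0" by simp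
    define t where "t = (\<bar>a \<bullet> c0\<bar> + \<bar>b\<bar> + 1) / (- a$i)"
    have "t \<ge> 0" unfolding t_def using ai by (intro divide_nonneg_nonneg) auto
    hence "axis i t \<in> Pos" unfolding Pos_def by (simp add: axis_def)
    hence "axis i t + c0 \<in> Z" unfolding Z_def using c0 by auto
    hence "a \<bullet> (axis i t + c0) > b" using ab by auto
    moreover have "a \<bullet> axis i t = a$i * t" by (simp add: inner_axis)
    moreover have "a$i * t = -(\<bar>a \<bullet> c0\<bar> + \<bar>b\<bar> + 1)" unfolding t_def using ai by auto
    ultimately show False by (simp add: inner_add_right)
  qed
  obtain v0 where v0: "v0 \<in> V" using ne by auto
  have "0 \<in> Pos" unfolding Pos_def by simp
  hence inV: "a \<bullet> v > b" if "v \<in> V" for v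
    using ab that hull_subset[of V convex] unfolding Z_def by force
  define s where "s = (\<Sum>i\<in>UNIV. a$i)"
  have "s \<noteq> 0"
  proof
    assume "s = 0"
    hence "\<forall>i\<in>UNIV. a$i = 0" unfolding s_def using ann by (simp add: sum_nonneg_eq_0_iff)
    hence "a = 0" by (simp add: vec_eq_iff)
    thus False using ab inV[OF v0] by simp
  qed
  hence spos: "s > 0" unfolding s_def using ann by (simp add: sum_nonneg order_le_neq_trans)
  define q where "q = (1/s) *\<^sub>R a"
  have "q \<in> prob_simplex" unfolding prob_simplex_def q_def using spos ann
    by (simp add: s_def sum_divide_distrib[symmetric])
  then obtain v where v: "v \<in> V" "q \<bullet> v \<le> q \<bullet> w" using H by blast
  hence "a \<bullet> v \<le> a \<bullet> w" unfolding q_def using spos by (simp add: divide_le_cancel)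
  thus False using ab inV[OF v(1)] by simp
qed


theorem mainTheorem5:
  fixes L :: "'k::finite \<Rightarrow> real ^ 'n::finite"
    and psi :: "real ^ 'd::finite \<Rightarrow> real ^ 'n"
    and C :: "(real ^ 'd) set"
    and r :: nat
    and z :: "nat \<Rightarrow> real ^ 'n"
  assumes L_nonneg: "\<forall>t i. 0 \<le> L t $ i"
    and C_convex: "convex C"
    and psi_nonneg: "\<forall>u\<in>C. \<forall>i. 0 \<le> psi u $ i"
    and r_pos: "r \<ge> 1"
    and z_in: "\<forall>j\<in>{1..r}. z j \<in> S_psi psi C"
    and cover: "(\<Union>j\<in>{1..r}. normal_set psi C (z j)) = prob_simplex"
    and refine: "\<forall>j\<in>{1..r}. \<exists>t. normal_set psi C (z j) \<subseteq> trigger_set L t"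
  shows "calibrated L psi C"
proof -
  define S where "S = S_psi psi C"
  define V where "V = z ` {1..r}"
  define opt where "opt q = Inf ((\<lambda>z'. q \<bullet> z') ` S)" for q :: "real^'n"
  have finV: "finite V" unfolding V_def by simp
  have neV: "V \<noteq> {}" unfolding V_def using r_pos by auto
  have VS: "V \<subseteq> S" unfolding V_def S_def using z_in by auto
  have CS: "psi ` C \<subseteq> S" unfolding S_def S_psi_def by (rule hull_subset)
  have nonneg: "0 \<le> q \<bullet> x" if q: "q \<in> prob_simplex" and x: "x \<in> S" for q x
  proof -
    have "psi ` C \<subseteq> {x. 0 \<le> q \<bullet> x}"
      using q psi_nonneg unfolding prob_simplex_def
      by (auto intro!: inner_mono_nonneg[of q 0, simplified])
    hence "S \<subseteq> {x. 0 \<le> q \<bullet> x}" unfolding S_def S_psi_def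
      by (intro hull_minimal) (auto intro: convex_halfspace_ge[of 0 q, simplified])
    thus ?thesis using x by auto
  qed
  have optle: "opt q \<le> q \<bullet> x" if q: "q \<in> prob_simplex" and x: "x \<in> S" for q x
    unfolding opt_def using nonneg[OF q] x
    by (intro cInf_lower) (auto intro: bdd_belowI[of _ 0])
  have H1: "\<exists>v\<in>V. q \<bullet> v = opt q" if q: "q \<in> prob_simplex" for q
  proof -
    from q cover obtain j where "j \<in> {1..r}" "q \<in> normal_set psi C (z j)" by blast
    thus ?thesis unfolding normal_set_def opt_def V_def S_def by auto
  qed
  define P where "P u v \<longleftrightarrow> v \<in> V \<and> (\<exists>\<mu>. (\<forall>x\<in>V. 0 \<le> \<mu> x) \<and> sum \<mu> V = 1 \<and>
      (\<forall>i. (\<Sum>x\<in>V. \<mu> x *\<^sub>R x) $ i \<le> psi u $ i) \<and> \<mu> v \<ge> 1 / card V)" for u v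
  have Pex: "\<exists>v. P u v" if u: "u \<in> C" for u
  proof -
    have "\<forall>q\<in>prob_simplex. \<exists>v\<in>V. q \<bullet> v \<le> q \<bullet> psi u"
      proof
      fix q :: "real^'n" assume q: "q \<in> prob_simplex"
      then obtain v where "v \<in> V" "q \<bullet> v = opt q" using H1 by blast
      moreover have "opt q \<le> q \<bullet> psi u" using optle[OF q] CS u by auto
      ultimately show "\<exists>v\<in>V. q \<bullet> v \<le> q \<bullet> psi u" by (intro bexI[where x=v]) simp_all
    qed
    from in_Z[OF finV neV this] obtain c where c: "c \<in> convex hull V" "\<forall>i. c$i \<le> psi u $ i"
      by blast
    then obtain \<mu> where mu: "\<forall>x\<in>V. 0 \<le> \<mu> x" "sum \<mu> V = 1" "(\<Sum>x\<in>V. \<mu> x *\<^sub>R x) = c"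
      unfolding convex_hull_finite[OF finV] by blast
    have "\<exists>v\<in>V. \<mu> v \<ge> 1 / card V"
    proof (rule ccontr)
      assume "\<not> ?thesis"
      hence "\<forall>v\<in>V. \<mu> v < 1 / card V" by auto
      hence "sum \<mu> V < (\<Sum>v\<in>V. 1 / card V)" using finV neV by (intro sum_strict_mono) auto
      also have "\<dots> = 1" using finV neV by simp
      finally show False using mu by simp
    qed
    thus ?thesis unfolding P_def using mu c by blast
  qed
  define T where "T v = (SOME t. normal_set psi C v \<subseteq> trigger_set L t)" for v
  have Tok: "normal_set psi C v \<subseteq> trigger_set L (T v)" if "v \<in> V" for v
  proof -
    from that obtain j where "j \<in> {1..r}" "v = z j" unfolding V_def by auto
    hence "\<exists>t. normal_set psi C v \<subseteq> trigger_set L t" using refine by auto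
    thus ?thesis unfolding T_def by (rule someI_ex)
  qed
  define pred where "pred u = T (SOME v. P u v)" for u
  show ?thesis unfolding calibrated_def
  proof (intro exI[of _ pred] ballI)
    fix p :: "real^'n" assume p: "p \<in> prob_simplex"
    define m where "m = opt p"
    define B where "B = {v\<in>V. p \<bullet> v \<noteq> m}"
    define \<delta> where "\<delta> = (if B = {} then 1 else Min ((\<lambda>v. p \<bullet> v - m) ` B))"
    have finB: "finite B" unfolding B_def using finV by simp
    have Bgt: "p \<bullet> v - m > 0" if "v \<in> B" for v
    proof -
      have "v \<in> V" "p \<bullet> v \<noteq> m" using that unfolding B_def by auto
      moreover have "m \<le> p \<bullet> v" unfolding m_def using optle[OF p] VS \<open>v \<in> V\<close> by blast
      ultimately show ?thesis by simp
    qed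
    have dpos: "\<delta> > 0" unfolding \<delta>_def using finB Bgt by (simp add: Min_gr_iff)
    have dle: "\<delta> \<le> p \<bullet> v - m" if "v \<in> B" for v
      unfolding \<delta>_def using that finB by auto
    have cpos: "real (card V) > 0" using finV neV by (simp add: card_gt_0_iff)
    have claim1: "m + \<delta> / card V \<le> p \<bullet> psi u"
      if u: "u \<in> C" and bad: "pred u \<notin> argmin_loss L p" for u
    proof -
      define v0 where "v0 = (SOME v. P u v)"
      have Pv0: "P u v0" unfolding v0_def using Pex[OF u] by (rule someI_ex)
      hence v0V: "v0 \<in> V" unfolding P_def by auto
      have "v0 \<in> B"
      proof (rule ccontr)
        assume "v0 \<notin> B"
        hence "p \<bullet> v0 = m" using v0V unfolding B_def by auto
        hence "p \<in> normal_set psi C v0" using p unfolding normal_set_def m_def opt_def S_def by auto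
        hence "T v0 \<in> argmin_loss L p" using Tok[OF v0V] unfolding trigger_set_def by auto
        thus False using bad unfolding pred_def v0_def by simp
      qed
      from Pv0 obtain \<mu> where mu: "\<forall>x\<in>V. 0 \<le> \<mu> x" "sum \<mu> V = 1"
        "\<forall>i. (\<Sum>x\<in>V. \<mu> x *\<^sub>R x) $ i \<le> psi u $ i" "\<mu> v0 \<ge> 1 / card V"
        unfolding P_def by blast
      have "p \<bullet> (\<Sum>x\<in>V. \<mu> x *\<^sub>R x) \<le> p \<bullet> psi u"
        using p mu(3) unfolding prob_simplex_def by (intro inner_mono_nonneg) auto
      moreover have "p \<bullet> (\<Sum>x\<in>V. \<mu> x *\<^sub>R x) = (\<Sum>x\<in>V. \<mu> x * (p \<bullet> x))"
        by (simp add: inner_sum_right)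
      moreover have "(\<Sum>x\<in>V. \<mu> x * (p \<bullet> x)) = m + (\<Sum>x\<in>V. \<mu> x * (p \<bullet> x - m))"
        using mu(2) by (simp add: ring_distribs sum.distrib sum_subtractf sum_distrib_right[symmetric])
      moreover have "\<mu> v0 * (p \<bullet> v0 - m) \<le> (\<Sum>x\<in>V. \<mu> x * (p \<bullet> x - m))"
        using v0V finV mu(1) optle[OF p] VS unfolding m_def
        by (intro member_le_sum) (auto intro!: mult_nonneg_nonneg)
      moreover have "(1 / card V) * \<delta> \<le> \<mu> v0 * (p \<bullet> v0 - m)"
        using mu(4) mu(1) v0V dle[OF \<open>v0 \<in> B\<close>] dpos cpos by (intro mult_mono) auto
      ultimately show ?thesis by simp
    qed
    have claim2: "\<exists>u\<in>C. p \<bullet> psi u < m + \<delta> / card V"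
    proof -
      define M where "M = Inf ((\<lambda>u. p \<bullet> psi u) ` C)"
      have Cne: "C \<noteq> {}" using neV VS unfolding S_def S_psi_def by auto
      have "psi ` C \<subseteq> {x. M \<le> p \<bullet> x}" unfolding M_def
        using nonneg[OF p] CS by (auto intro!: cInf_lower bdd_belowI[of _ 0])
      hence "S \<subseteq> {x. M \<le> p \<bullet> x}" unfolding S_def S_psi_def
        by (intro hull_minimal) (auto intro: convex_halfspace_ge[of M p, simplified])
      moreover obtain v where "v \<in> V" "p \<bullet> v = m" using H1[OF p] unfolding m_def by auto
      ultimately have "M \<le> m" using VS by auto
      moreover have "0 < \<delta> / card V" using dpos cpos by simp
      ultimately have "M < m + \<delta> / card V" by linarith
      then obtain y where "y \<in> (\<lambda>u. p \<bullet> psi u) ` C" "y < m + \<delta> / card V"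
        unfolding M_def using Cne cInf_lessD[of "(\<lambda>u. p \<bullet> psi u) ` C"] by blast
      thus ?thesis by auto
    qed
    from claim2 obtain u0 where u0: "u0 \<in> C" "p \<bullet> psi u0 < m + \<delta> / card V" by blast
    have "(INF u\<in>C. ereal (p \<bullet> psi u)) \<le> ereal (p \<bullet> psi u0)"
      using u0 by (intro INF_lower)
    also have "\<dots> < ereal (m + \<delta> / card V)" using u0 by simp
    also have "\<dots> \<le> (INF u\<in>{u\<in>C. pred u \<notin> argmin_loss L p}. ereal (p \<bullet> psi u))"
      using claim1 by (intro INF_greatest) auto
    finally show "(INF u\<in>{u\<in>C. pred u \<notin> argmin_loss L p}. ereal (p \<bullet> psi u))
          > (INF u\<in>C. ereal (p \<bullet> psi u))" .
  qed
qed

end
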